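(* Let $G$ be a finite simple graph which is either a tree or a unicyclic graph (a connected graph with exactly one cycle) whose cycle has odd length, and let $\mathcal{N}G$ be its normal graph algebra over a field $\mathbb{F}$ of characteristic not $2$. Then $G$ is edge-square: for every edge $\mathfrak{e}$ of $G$ there exists $u\in U_G$ with $u^2=\mathfrak{e}$.
   Context: For a finite simple graph $G$ with vertex set $VG$ and edge set $EG$ (edge with endpoints $x,y$ written $[x,y]$), the normal graph algebra $\mathcal{N}G$ is the $\mathbb{F}$-vector space $U_G\oplus\mathfrak{Z}_G$, where $U_G$ has basis $VG$ and $\mathfrak{Z}_G$ has basis $EG$, with commutative bilinear product determined by: for distinct vertices $x,y$, $xy=[x,y]$ if adjacent and $0$ otherwise; $x^2=\sum_{y\sim x}[x,y]$; all products involving an element of $\mathfrak{Z}_G$ are $0$. Equivalently, for $u=\sum_x\theta_x x$, $u^2=\sum_{[x,y]\in EG}(\theta_x+\theta_y)^2[x,y]$. *)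

theory Defs
  imports Main
begin

definition simple_graph :: "'a set \<Rightarrow> 'a set set \<Rightarrow> bool" where
  "simple_graph V E \<longleftrightarrow> finite V \<and>
     (\<forall>e\<in>E. \<exists>x y. x \<noteq> y \<and> x \<in> V \<and> y \<in> V \<and> e = {x, y})"

definition adj :: "'a set set \<Rightarrow> 'a \<Rightarrow> 'a \<Rightarrow> bool" where
  "adj E x y \<longleftrightarrow> x \<noteq> y \<and> {x, y} \<in> E"

definition graph_connected :: "'a set \<Rightarrow> 'a set set \<Rightarrow> bool" where
  "graph_connected V E \<longleftrightarrow> V \<noteq> {} \<and> (\<forall>x\<in>V. \<forall>y\<in>V. (adj E)\<^sup>*\<^sup>* x y)"

definition is_cycle_list :: "'a set \<Rightarrow> 'a set set \<Rightarrow> 'a list \<Rightarrow> bool" where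
  "is_cycle_list V E vs \<longleftrightarrow> length vs \<ge> 3 \<and> distinct vs \<and> set vs \<subseteq> V \<and>
     (\<forall>i < length vs. {vs ! i, vs ! ((i + 1) mod length vs)} \<in> E)"

definition cycle_edges :: "'a list \<Rightarrow> 'a set set" where
  "cycle_edges vs = {{vs ! i, vs ! ((i + 1) mod length vs)} | i. i < length vs}"

text \<open>The cycles of G, each identified with its (sub)graph, i.e. its edge set.\<close>
definition graph_cycles :: "'a set \<Rightarrow> 'a set set \<Rightarrow> 'a set set set" where
  "graph_cycles V E = {cycle_edges vs | vs. is_cycle_list V E vs}"

definition is_tree :: "'a set \<Rightarrow> 'a set set \<Rightarrow> bool" where
  "is_tree V E \<longleftrightarrow> graph_connected V E \<and> graph_cycles V E = {}"

definition is_odd_unicyclic :: "'a set \<Rightarrow> 'a set set \<Rightarrow> bool" where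
  "is_odd_unicyclic V E \<longleftrightarrow> graph_connected V E \<and>
     (\<exists>C. graph_cycles V E = {C} \<and> odd (card C))"

text \<open>Square of u = sum_x theta_x x in the normal graph algebra, as coordinate vector
  w.r.t. the edge basis of Z_G: coefficient of edge [x,y] is (theta_x + theta_y)^2.\<close>
definition nsq :: "'a set set \<Rightarrow> ('a \<Rightarrow> 'k::field) \<Rightarrow> 'a set \<Rightarrow> 'k" where
  "nsq E \<theta> e = (if e \<in> E then (\<Sum>x\<in>e. \<theta> x)\<^sup>2 else 0)"

text \<open>G is edge-square over 'k: every basis edge e is u^2 for some u in U_G.\<close>
definition edge_square :: "'k::field itself \<Rightarrow> 'a set \<Rightarrow> 'a set set \<Rightarrow> bool" where
  "edge_square TYPE('k) V E \<longleftrightarrow>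
     (\<forall>e\<in>E. \<exists>\<theta>::'a \<Rightarrow> 'k. (\<forall>x. x \<notin> V \<longrightarrow> \<theta> x = 0) \<and>
        nsq E \<theta> = (\<lambda>f. if f = e then 1 else 0))"

end

theory Submission imports Defs begin

definition wk :: "'a set set \<Rightarrow> 'a list \<Rightarrow> bool" where
  "wk F p \<longleftrightarrow> p \<noteq> [] \<and> successively (\<lambda>a b. {a,b} \<in> F) p"

definition proper :: "'a set set \<Rightarrow> bool" where
  "proper F \<longleftrightarrow> (\<forall>f\<in>F. \<exists>a b. a \<noteq> b \<and> f = {a,b})"

lemma proper_ne: "proper F \<Longrightarrow> {a,b} \<in> F \<Longrightarrow> a \<noteq> b"
  unfolding proper_def by (metis doubleton_eq_iff insert_absorb2)

lemma succ_split: "zs \<noteq> [] \<Longrightarrow> successively P (xs @ y # zs) \<longleftrightarrow> successively P (xs @ [y]) \<and> successively P (y # zs)"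
  by (induction xs rule: induct_list012) (auto simp: successively_Cons)

lemma sD1: "successively P (xs @ ys) \<Longrightarrow> successively P xs"
  by (simp add: successively_append_iff)
lemma sD2: "successively P (xs @ ys) \<Longrightarrow> successively P ys"
  by (simp add: successively_append_iff)
lemma sI: "successively P (xs @ [y]) \<Longrightarrow> successively P (y # zs) \<Longrightarrow> successively P (xs @ y # zs)"
  by (cases zs) (simp_all add: succ_split)

lemma wk_rev: "wk F p \<Longrightarrow> wk F (rev p)"
  unfolding wk_def by (simp add: insert_commute)

lemma wk_app: "wk F p \<Longrightarrow> wk F q \<Longrightarrow> last p = hd q \<Longrightarrow> wk F (p @ tl q)"
  unfolding wk_def
  by (cases q; cases "tl q") (auto simp: successively_append_iff)

lemma wk_snoc: "wk F p \<Longrightarrow> {last p, w} \<in> F \<Longrightarrow> wk F (p @ [w])"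
  unfolding wk_def by (auto simp: successively_append_iff)

lemma wk_prefix: "wk F p \<Longrightarrow> z \<in> set p \<Longrightarrow> \<exists>q. wk F q \<and> hd q = hd p \<and> last q = z \<and> set q \<subseteq> set p"
proof -
  assume a: "wk F p" "z \<in> set p"
  then obtain u v where p: "p = u @ z # v" by (meson split_list)
  show ?thesis
    apply (rule exI[of _ "u @ [z]"])
    using a p sD1[of _ "u @ [z]" v] unfolding wk_def by (cases u) auto
qed

lemma wk_mono: "wk F p \<Longrightarrow> F \<subseteq> G \<Longrightarrow> wk G p"
  unfolding wk_def by (auto elim: successively_mono)

lemma wk_set: "wk F p \<Longrightarrow> hd p \<in> V \<Longrightarrow> (\<forall>f\<in>F. f \<subseteq> V) \<Longrightarrow> set p \<subseteq> V"
  unfolding wk_def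
proof (induction p rule: induct_list012)
  case (3 x y zs)
  then have "y \<in> V" by auto
  then show ?case using 3 by auto
qed auto

lemma wk_path: "wk F p \<Longrightarrow> \<exists>q. wk F q \<and> hd q = hd p \<and> last q = last p \<and> distinct q \<and> set q \<subseteq> set p"
proof (induction "length p" arbitrary: p rule: less_induct)
  case less
  show ?case
  proof (cases "distinct p")
    case True then show ?thesis using less by blast
  next
    case False
    then obtain xs ys zs y where p: "p = xs@[y]@ys@[y]@zs" using not_distinct_decomp by blast
    let ?q = "xs@[y]@zs"
    have s: "successively (\<lambda>a b. {a,b} \<in> F) ((xs @ [y]) @ (ys @ [y]) @ zs)" using less(2) unfolding p wk_def by simp
    have "successively (\<lambda>a b. {a,b} \<in> F) (xs @ [y])" using sD1[OF s] .
    moreover have "successively (\<lambda>a b. {a,b} \<in> F) ((xs @ [y] @ ys) @ (y # zs))" using s by simp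
    then have "successively (\<lambda>a b. {a,b} \<in> F) (y # zs)" by (rule sD2)
    ultimately have "wk F ?q" unfolding wk_def using sI by fastforce
    moreover have "length ?q < length p" using p by simp
    ultimately obtain r where r: "wk F r \<and> hd r = hd ?q \<and> last r = last ?q \<and> distinct r \<and> set r \<subseteq> set ?q"
      using less(1) by blast
    have e: "hd ?q = hd p" "last ?q = last p" "set ?q \<subseteq> set p" using p by (cases xs; cases zs; auto)+
    show ?thesis apply (rule exI[of _ r]) using r e by auto
  qed
qed

lemma wk_cyc: "wk F p \<Longrightarrow> hd p = last p \<Longrightarrow> even (length p) \<Longrightarrow>
  \<exists>q. wk F q \<and> hd q = last q \<and> even (length q) \<and> distinct (butlast q) \<and> set q \<subseteq> set p"
proof (induction "length p" arbitrary: p rule: less_induct)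
  case less
  show ?case
  proof (cases "distinct (butlast p)")
    case True then show ?thesis using less by blast
  next
    case False
    have pne: "p \<noteq> []" using less(2) unfolding wk_def by simp
    then have pp: "p = butlast p @ [last p]" by simp
    obtain xs ys zs y where b: "butlast p = xs@[y]@ys@[y]@zs" using not_distinct_decomp False by blast
    define h where "h = last p"
    have p: "p = xs@[y]@ys@[y]@zs@[h]" using pp b h_def by simp
    have hp: "hd p = h" using less(3) h_def by simp
    let ?q1 = "y # ys @ [y]"
    let ?q2 = "xs@[y]@zs@[h]"
    have s: "successively (\<lambda>a b. {a,b} \<in> F) (xs@[y]@ys@[y]@zs@[h])" using less(2) p unfolding wk_def by metis
    have s1: "successively (\<lambda>a b. {a,b} \<in> F) (xs @ [y])" using sD1[of _ "xs @ [y]"] s by simp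
    have s2: "successively (\<lambda>a b. {a,b} \<in> F) ((y # ys @ [y]) @ (zs @ [h]))" using sD2[of _ xs] s by simp
    have w1: "wk F ?q1" using sD1[OF s2] unfolding wk_def by simp
    have "successively (\<lambda>a b. {a,b} \<in> F) ((xs @ [y] @ ys) @ (y # zs @ [h]))" using s by simp
    then have s3: "successively (\<lambda>a b. {a,b} \<in> F) (y # zs @ [h])" by (rule sD2)
    have w2: "wk F ?q2" using sI[OF s1 s3] unfolding wk_def by simp
    have h2: "hd ?q2 = last ?q2" using hp p by (cases xs) auto
    have l: "length ?q1 < length p" "length ?q2 < length p" using p by simp_all
    have ss: "set ?q1 \<subseteq> set p" "set ?q2 \<subseteq> set p" using p by auto
    have "even (length ?q1) \<or> even (length ?q2)" using less(4) p by auto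
    then show ?thesis
    proof
      assume "even (length ?q1)"
      then show ?thesis using less(1)[OF l(1) w1] ss by fastforce
    next
      assume "even (length ?q2)"
      then show ?thesis using less(1)[OF l(2) w2 h2] ss by fastforce
    qed
  qed
qed

lemma cyc_of_closed:
  assumes "proper F" "wk F q" "hd q = last q" "even (length q)" "distinct (butlast q)" "set q \<subseteq> V"
  shows "is_cycle_list V F (butlast q)"
proof -
  have qne: "q \<noteq> []" and sq: "successively (\<lambda>a b. {a,b} \<in> F) q" using assms(2) unfolding wk_def by auto
  have "length q > 0" using qne by simp
  then have l2: "length q \<ge> 2" using assms(4) by presburger
  have "length q \<noteq> 2"
  proof
    assume "length q = 2"
    then obtain a b where q: "q = [a,b]" by (metis (no_types) length_0_conv length_Suc_conv numeral_2_eq_2)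
    then have "a = b" using assms(3) by simp
    moreover have "{a,b} \<in> F" using sq q by simp
    ultimately show False using proper_ne[OF assms(1)] by blast
  qed
  then have l4: "length q \<ge> 4" using l2 assms(4) by presburger
  let ?n = "length (butlast q)"
  have n: "?n = length q - 1" by simp
  have "{butlast q ! i, butlast q ! ((i + 1) mod ?n)} \<in> F" if i: "i < ?n" for i
  proof -
    have a: "butlast q ! i = q ! i" using i by (simp add: nth_butlast)
    have b: "butlast q ! ((i + 1) mod ?n) = q ! Suc i"
    proof (cases "i + 1 < ?n")
      case True then show ?thesis by (simp add: nth_butlast)
    next
      case False
      then have "i + 1 = ?n" using i by simp
      then have "(i + 1) mod ?n = 0" by simp
      moreover have "butlast q ! 0 = hd q" using l4 qne by (simp add: nth_butlast hd_conv_nth)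
      moreover have "q ! Suc i = last q" using \<open>i + 1 = ?n\<close> qne by (simp add: last_conv_nth)
      ultimately show ?thesis using assms(3) by simp
    qed
    show ?thesis unfolding a b using successively_nth[OF sq] i by simp
  qed
  moreover have "set (butlast q) \<subseteq> V" using assms(6) by (meson in_set_butlastD subset_iff)
  ultimately show ?thesis unfolding is_cycle_list_def using l4 assms(5) by simp
qed

lemma path_cyc:
  assumes "proper F" "wk F p" "distinct p" "hd p = x" "last p = y" "x \<noteq> y" "{x,y} \<notin> F"
    "set p \<subseteq> V" "F \<subseteq> E" "{x,y} \<in> E"
  shows "is_cycle_list V E p \<and> {x,y} \<in> cycle_edges p"
proof -
  have pne: "p \<noteq> []" and sp: "successively (\<lambda>a b. {a,b} \<in> F) p" using assms(2) unfolding wk_def by auto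
  have l2: "length p \<ge> 2"
  proof (rule ccontr)
    assume "\<not> ?thesis"
    moreover have "length p > 0" using pne by simp
    ultimately have "length p = 1" by linarith
    then obtain a where "p = [a]" by (metis One_nat_def length_0_conv length_Suc_conv)
    then show False using assms by simp
  qed
  have "length p \<noteq> 2"
  proof
    assume "length p = 2"
    then obtain a b where p: "p = [a,b]" by (metis (no_types) length_0_conv length_Suc_conv numeral_2_eq_2)
    then show False using assms sp by simp
  qed
  then have l3: "length p \<ge> 3" using l2 by simp
  let ?n = "length p"
  have last: "{p ! (?n - 1), p ! ((?n - 1 + 1) mod ?n)} = {x,y}"
    using assms(4,5) pne l3 by (simp add: last_conv_nth hd_conv_nth insert_commute)
  have "{p ! i, p ! ((i + 1) mod ?n)} \<in> E" if i: "i < ?n" for i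
  proof (cases "i + 1 < ?n")
    case True then show ?thesis using successively_nth[OF sp, of i] assms(9) by auto
  next
    case False
    then have "i = ?n - 1" using i by simp
    then show ?thesis using last assms(10) by simp
  qed
  then have "is_cycle_list V E p" unfolding is_cycle_list_def using l3 assms(3,8) by simp
  moreover have "{x,y} \<in> cycle_edges p" unfolding cycle_edges_def using last l3
    by (metis (mono_tags, lifting) diff_less mem_Collect_eq pne length_greater_0_conv zero_less_one)
  ultimately show ?thesis by blast
qed

lemma cyc_card:
  assumes "distinct vs" "length vs \<ge> 3"
  shows "card (cycle_edges vs) = length vs"
proof -
  let ?n = "length vs"
  let ?f = "\<lambda>i. {vs ! i, vs ! ((i + 1) mod ?n)}"
  have ce: "cycle_edges vs = ?f ` {..<?n}" unfolding cycle_edges_def by auto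
  have "inj_on ?f {..<?n}"
  proof
    fix i j assume i: "i \<in> {..<?n}" and j: "j \<in> {..<?n}" and e: "?f i = ?f j"
    have "?n > 0" using assms by linarith
    then have mi: "(i + 1) mod ?n < ?n" "(j + 1) mod ?n < ?n" by simp_all
    have inj: "\<And>a b. a < ?n \<Longrightarrow> b < ?n \<Longrightarrow> vs ! a = vs ! b \<Longrightarrow> a = b"
      using assms(1) nth_eq_iff_index_eq by blast
    from e have "(vs ! i = vs ! j \<and> vs ! ((i + 1) mod ?n) = vs ! ((j + 1) mod ?n)) \<or>
       (vs ! i = vs ! ((j + 1) mod ?n) \<and> vs ! ((i + 1) mod ?n) = vs ! j)"
      by (simp add: doubleton_eq_iff)
    then show "i = j"
    proof
      assume "vs ! i = vs ! j \<and> vs ! ((i + 1) mod ?n) = vs ! ((j + 1) mod ?n)"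
      then show ?thesis using inj i j by auto
    next
      assume h: "vs ! i = vs ! ((j + 1) mod ?n) \<and> vs ! ((i + 1) mod ?n) = vs ! j"
      then have 1: "i = (j + 1) mod ?n" and 2: "(i + 1) mod ?n = j" using inj i j mi by auto
      have "((i + 1) mod ?n + 1) mod ?n = (i + 1 + 1) mod ?n" by (rule mod_add_left_eq)
      then have "i = (i + 2) mod ?n" using 1 2 by simp
      moreover have "(i + 2) mod ?n \<noteq> i"
      proof (cases "i + 2 < ?n")
        case True then show ?thesis by simp
      next
        case False
        then have "(i + 2) mod ?n = i + 2 - ?n" using i assms(2)
          by (simp add: mod_if le_mod_geq)
        then show ?thesis using i assms(2) False by simp
      qed
      ultimately show ?thesis by simp
    qed
  qed
  then show ?thesis unfolding ce by (simp add: card_image)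
qed

lemma cyc_sub: "is_cycle_list V F vs \<Longrightarrow> cycle_edges vs \<subseteq> F"
  unfolding is_cycle_list_def cycle_edges_def by auto

lemma cyc_verts: "f \<in> cycle_edges vs \<Longrightarrow> length vs > 0 \<Longrightarrow> f \<subseteq> set vs"
  unfolding cycle_edges_def by auto

lemma construct:
  assumes sg: "simple_graph V E" and eE: "e \<in> E" and exy: "e = {x,y}" and xy: "x \<noteq> y" and xV: "x \<in> V"
    and ch: "CHAR('k::field) \<noteq> 2"
    and noOx: "\<not> (\<exists>p. wk (E - {e}) p \<and> hd p = x \<and> last p = x \<and> even (length p))"
    and noOy: "\<not> (\<exists>p. wk (E - {e}) p \<and> hd p = x \<and> last p = y \<and> even (length p))"
  shows "\<exists>\<theta>::'a \<Rightarrow> 'k. (\<forall>v. v \<notin> V \<longrightarrow> \<theta> v = 0) \<and> nsq E \<theta> = (\<lambda>f. if f = e then 1 else 0)"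
proof -
  define F where "F = E - {e}"
  define Ev where "Ev v \<longleftrightarrow> (\<exists>p. wk F p \<and> hd p = x \<and> last p = v \<and> odd (length p))" for v
  define Od where "Od v \<longleftrightarrow> (\<exists>p. wk F p \<and> hd p = x \<and> last p = v \<and> even (length p))" for v
  have FV: "\<forall>f\<in>F. f \<subseteq> V"
  proof
    fix f assume "f \<in> F"
    then have "f \<in> E" unfolding F_def by simp
    then obtain a b where "a \<in> V" "b \<in> V" "f = {a,b}" using sg unfolding simple_graph_def by blast
    then show "f \<subseteq> V" by simp
  qed
  have two: "(2::'k) \<noteq> 0"
  proof
    assume "(2::'k) = 0"
    then have "(of_nat 2::'k) = 0" by simp
    then have d: "CHAR('k) dvd 2" by (simp only: of_nat_eq_0_iff_char_dvd)
    have "CHAR('k) \<noteq> 1"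
    proof
      assume "CHAR('k) = 1"
      then have "(of_nat 1::'k) = 0" by (simp only: of_nat_eq_0_iff_char_dvd) simp
      then show False by simp
    qed
    moreover have "CHAR('k) \<le> 2" using d by (simp add: dvd_imp_le)
    moreover have "CHAR('k) \<noteq> 0" using d by (metis dvd_0_left_iff zero_neq_numeral)
    ultimately show False using ch by linarith
  qed
  have nb: "\<not> (Ev v \<and> Od v)" for v
  proof
    assume "Ev v \<and> Od v"
    then obtain p q where p: "wk F p" "hd p = x" "last p = v" "odd (length p)"
      and q: "wk F q" "hd q = x" "last q = v" "even (length q)" unfolding Ev_def Od_def by blast
    have qne: "q \<noteq> []" using q unfolding wk_def by simp
    have pne: "p \<noteq> []" using p unfolding wk_def by simp
    have "length q > 0" using qne by simp
    then have lq: "length q \<ge> 2" using q(4) by presburger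
    let ?r = "p @ tl (rev q)"
    have "wk F ?r" using wk_app[OF p(1) wk_rev[OF q(1)]] p(3) q(3) qne by (simp add: hd_rev)
    moreover have "hd ?r = x" using p pne by simp
    moreover have "tl (rev q) \<noteq> []" using lq by (cases "rev q") auto
    then have "last ?r = x" using q(2) qne by (simp add: last_tl last_rev)
    moreover have "even (length ?r)" using p(4) q(4) lq by simp
    ultimately show False using noOx unfolding F_def by blast
  qed
  have ext1: "Od w" if ta: "Ev u" and tb: "{u,w} \<in> F" for u w
  proof -
    obtain p where p: "wk F p" "hd p = x" "last p = u" "odd (length p)" using ta unfolding Ev_def by blast
    have "p \<noteq> []" using p unfolding wk_def by simp
    then show ?thesis unfolding Od_def
      apply (intro exI[of _ "p @ [w]"]) using p wk_snoc[OF p(1)] tb by auto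
  qed
  have ext2: "Ev w" if ta: "Od u" and tb: "{u,w} \<in> F" for u w
  proof -
    obtain p where p: "wk F p" "hd p = x" "last p = u" "even (length p)" using ta unfolding Od_def by blast
    have "p \<noteq> []" using p unfolding wk_def by simp
    then show ?thesis unfolding Ev_def
      apply (intro exI[of _ "p @ [w]"]) using p wk_snoc[OF p(1)] tb by auto
  qed
  have inV: "Ev v \<or> Od v \<Longrightarrow> v \<in> V" for v
  proof -
    assume "Ev v \<or> Od v"
    then obtain p where "wk F p" "hd p = x" "last p = v" unfolding Ev_def Od_def by blast
    moreover then have "set p \<subseteq> V" using wk_set FV xV by blast
    ultimately show "v \<in> V" unfolding wk_def by auto
  qed
  have Evx: "Ev x" unfolding Ev_def wk_def by (rule exI[of _ "[x]"]) simp
  define c :: 'k where "c = (if Ev y then 1/2 else 1)"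
  define \<theta> :: "'a \<Rightarrow> 'k" where "\<theta> v = c * (if Ev v then 1 else if Od v then -1 else 0)" for v
  have out: "\<forall>v. v \<notin> V \<longrightarrow> \<theta> v = 0" unfolding \<theta>_def using inV by auto
  have zero: "\<theta> u + \<theta> w = 0" if uw: "{u,w} \<in> F" for u w
  proof -
    have wu: "{w,u} \<in> F" using uw by (simp add: insert_commute)
    show ?thesis
    proof (cases "Ev u")
      case True
      then have "Od w" "\<not> Ev w" using ext1 uw nb by blast+
      then show ?thesis using True unfolding \<theta>_def by simp
    next
      case nE: False
      show ?thesis
      proof (cases "Od u")
        case True
        then have "Ev w" using ext2 uw by blast
        then show ?thesis using True nE unfolding \<theta>_def by simp
      next
        case False
        then have "\<not> Ev w" "\<not> Od w" using ext1 ext2 wu nE by blast+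
        then show ?thesis using False nE unfolding \<theta>_def by simp
      qed
    qed
  qed
  have one: "\<theta> x + \<theta> y = 1"
  proof (cases "Ev y")
    case True
    then show ?thesis unfolding \<theta>_def c_def using Evx two by (simp add: field_simps)
  next
    case False
    have "\<not> Od y" using noOy unfolding Od_def F_def by blast
    then show ?thesis unfolding \<theta>_def c_def using Evx False by simp
  qed
  have "nsq E \<theta> = (\<lambda>f. if f = e then 1 else 0)"
  proof
    fix f
    show "nsq E \<theta> f = (if f = e then 1 else 0)"
    proof (cases "f \<in> E")
      case False then show ?thesis unfolding nsq_def using eE by auto
    next
      case True
      then obtain u w where uw: "u \<noteq> w" "f = {u,w}" using sg unfolding simple_graph_def by blast
      have s: "(\<Sum>z\<in>f. \<theta> z) = \<theta> u + \<theta> w" using uw by simp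
      show ?thesis
      proof (cases "f = e")
        case True
        then have "\<theta> u + \<theta> w = 1" using one uw exy
          by (metis add.commute doubleton_eq_iff)
        then show ?thesis unfolding nsq_def using s True eE by simp
      next
        case False
        then have "{u,w} \<in> F" using True uw unfolding F_def by simp
        then show ?thesis unfolding nsq_def using s False True zero by simp
      qed
    qed
  qed
  then show ?thesis using out by blast
qed

lemma join:
  assumes "wk F p" "wk F q" "last p = last q"
  shows "wk F (p @ tl (rev q)) \<and> hd (p @ tl (rev q)) = hd p \<and> last (p @ tl (rev q)) = hd q \<and>
         length (p @ tl (rev q)) = length p + length q - 1"
proof -
  have pne: "p \<noteq> []" and qne: "q \<noteq> []" using assms unfolding wk_def by auto
  have w: "wk F (p @ tl (rev q))" using wk_app[OF assms(1) wk_rev[OF assms(2)]] assms(3) qne by (simp add: hd_rev)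
  have l: "last (p @ tl (rev q)) = hd q"
  proof (cases "tl (rev q) = []")
    case True
    then have "length q = 1" using qne by (cases "rev q") auto
    then obtain a where "q = [a]" by (metis One_nat_def length_0_conv length_Suc_conv)
    then show ?thesis using True assms(3) by simp
  next
    case False
    then show ?thesis using qne by (simp add: last_tl last_rev)
  qed
  show ?thesis using w l pne qne by (cases q) auto
qed

lemma oddcyc:
  assumes "proper F" "\<forall>f\<in>F. f \<subseteq> V" "wk F p" "hd p \<in> V" "hd p = last p" "even (length p)"
  shows "\<exists>vs. is_cycle_list V F vs \<and> set vs \<subseteq> set p"
proof -
  obtain q where q: "wk F q" "hd q = last q" "even (length q)" "distinct (butlast q)" "set q \<subseteq> set p"
    using wk_cyc[OF assms(3,5,6)] by blast
  have "set p \<subseteq> V" using wk_set assms by blast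
  then have "is_cycle_list V F (butlast q)" using cyc_of_closed[OF assms(1) q(1-4)] q(5) by blast
  moreover have "set (butlast q) \<subseteq> set p" using q(5) by (meson in_set_butlastD subset_iff)
  ultimately show ?thesis by blast
qed

lemma cyc_monoE: "is_cycle_list V F vs \<Longrightarrow> F \<subseteq> E \<Longrightarrow> cycle_edges vs \<in> graph_cycles V E"
  unfolding graph_cycles_def is_cycle_list_def by blast

theorem proposition6p2:
  fixes V :: "'a set" and E :: "'a set set"
  assumes "simple_graph V E"
    and "is_tree V E \<or> is_odd_unicyclic V E"
    and "CHAR('k::field) \<noteq> 2"
  shows "edge_square TYPE('k) V E"
  unfolding edge_square_def
proof
  fix e assume eE: "e \<in> E"
  obtain x y where xy: "x \<noteq> y" "x \<in> V" "y \<in> V" "e = {x,y}" using assms(1) eE unfolding simple_graph_def by blast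
  define F where "F = E - {e}"
  have FE: "F \<subseteq> E" unfolding F_def by blast
  have eF: "e \<notin> F" unfolding F_def by blast
  have pr: "proper F" unfolding proper_def
  proof
    fix f assume "f \<in> F"
    then have "f \<in> E" unfolding F_def by simp
    then show "\<exists>a b. a \<noteq> b \<and> f = {a,b}" using assms(1) unfolding simple_graph_def by blast
  qed
  have FV: "\<forall>f\<in>F. f \<subseteq> V"
  proof
    fix f assume "f \<in> F"
    then have "f \<in> E" unfolding F_def by simp
    then obtain a b where "a \<in> V" "b \<in> V" "f = {a,b}" using assms(1) unfolding simple_graph_def by blast
    then show "f \<subseteq> V" by simp
  qed
  define Ow where "Ow a b \<longleftrightarrow> (\<exists>p. wk F p \<and> hd p = a \<and> last p = b \<and> even (length p))" for a b
  define Re where "Re a b \<longleftrightarrow> (\<exists>p. wk F p \<and> hd p = a \<and> last p = b)" for a b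
  have Ocyc: "\<exists>vs. is_cycle_list V F vs \<and> set vs \<subseteq> set p" if "wk F p" "hd p = a" "last p = a" "even (length p)" "a \<in> V" for p a
    using oddcyc[OF pr FV] that by simp
  have uni: "\<exists>C. graph_cycles V E = {C}" if "\<exists>vs. is_cycle_list V E vs"
  proof -
    from that obtain vs where "is_cycle_list V E vs" by blast
    then have "graph_cycles V E \<noteq> {}" using cyc_monoE by blast
    then show ?thesis using assms(2) unfolding is_tree_def is_odd_unicyclic_def by blast
  qed
  have goal: "(\<not> Ow x x \<and> \<not> Ow x y) \<or> (\<not> Ow y y \<and> \<not> Ow y x)"
  proof (cases "Re x y")
    case True
    then obtain p0 where "wk F p0" "hd p0 = x" "last p0 = y" unfolding Re_def by blast
    then obtain p where p: "wk F p" "hd p = x" "last p = y" "distinct p" using wk_path by metis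
    have "set p \<subseteq> V" using wk_set[OF p(1)] p(2) xy(2) FV by blast
    moreover have "{x,y} \<notin> F" using eF xy by simp
    ultimately have pc: "is_cycle_list V E p" "e \<in> cycle_edges p"
      using path_cyc[OF pr p(1,4,2,3) xy(1) _ _ FE] eE xy(4) by auto
    have "\<not> is_tree V E" using cyc_monoE[OF pc(1)] unfolding is_tree_def by blast
    then obtain C where C: "graph_cycles V E = {C}" "odd (card C)" using assms(2) unfolding is_odd_unicyclic_def by blast
    have pC: "cycle_edges p = C" using cyc_monoE[OF pc(1)] C by blast
    have l3: "length p \<ge> 3" using pc(1) unfolding is_cycle_list_def by simp
    have oddp: "odd (length p)" using cyc_card[OF p(4) l3] pC C(2) by simp
    have nOx: "\<not> Ow x x"
    proof
      assume "Ow x x"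
      then obtain q where q: "wk F q" "hd q = x" "last q = x" "even (length q)" unfolding Ow_def by blast
      obtain vs where "is_cycle_list V F vs" using Ocyc[OF q xy(2)] by blast
      then have "cycle_edges vs \<subseteq> F" "cycle_edges vs = C" using cyc_sub cyc_monoE[OF _ FE] C by blast+
      then show False using pC pc(2) eF by blast
    qed
    moreover have "\<not> Ow x y"
    proof
      assume "Ow x y"
      then obtain r where r: "wk F r" "hd r = x" "last r = y" "even (length r)" unfolding Ow_def by blast
      have j: "wk F (r @ tl (rev p))" "hd (r @ tl (rev p)) = x" "last (r @ tl (rev p)) = x"
        "length (r @ tl (rev p)) = length r + length p - 1"
        using join[OF r(1) p(1)] r(2,3) p(2,3) by auto
      have "even (length r + length p - 1)" using r(4) oddp l3 by presburger
      then have "Ow x x" unfolding Ow_def using j by metis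
      then show False using nOx by blast
    qed
    ultimately show ?thesis by blast
  next
    case False
    have n1: "\<not> Ow x y" using False unfolding Ow_def Re_def by blast
    have n2: "\<not> Ow y x"
    proof
      assume "Ow y x"
      then obtain r where r: "wk F r" "hd r = y" "last r = x" unfolding Ow_def by blast
      have "wk F (rev r)" using wk_rev[OF r(1)] .
      moreover have "r \<noteq> []" using r unfolding wk_def by simp
      ultimately show False using False r unfolding Re_def by (metis hd_rev last_rev)
    qed
    have "\<not> Ow x x \<or> \<not> Ow y y"
    proof (rule ccontr)
      assume "\<not> ?thesis"
      then obtain p1 p2 where p1: "wk F p1" "hd p1 = x" "last p1 = x" "even (length p1)"
        and p2: "wk F p2" "hd p2 = y" "last p2 = y" "even (length p2)" unfolding Ow_def by blast
      obtain vs1 where v1: "is_cycle_list V F vs1" "set vs1 \<subseteq> set p1" using Ocyc[OF p1 xy(2)] by blast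
      obtain vs2 where v2: "is_cycle_list V F vs2" "set vs2 \<subseteq> set p2" using Ocyc[OF p2 xy(3)] by blast
      have "is_cycle_list V E vs1" using v1(1) FE unfolding is_cycle_list_def by blast
      then obtain C where C: "graph_cycles V E = {C}" using uni by blast
      have e12: "cycle_edges vs1 = cycle_edges vs2" using cyc_monoE[OF v1(1) FE] cyc_monoE[OF v2(1) FE] C by blast
      have l1: "length vs1 > 0" "length vs2 > 0" using v1(1) v2(1) unfolding is_cycle_list_def by auto
      let ?z = "vs1 ! 0"
      have "{vs1 ! 0, vs1 ! ((0 + 1) mod length vs1)} \<in> cycle_edges vs1" unfolding cycle_edges_def using l1 by blast
      then have "?z \<in> set vs2" using cyc_verts[OF _ l1(2)] e12 by blast
      then have z2: "?z \<in> set p2" using v2(2) by blast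
      have z1: "?z \<in> set p1" using v1(2) l1 by (meson nth_mem subsetD)
      obtain q1 where q1: "wk F q1" "hd q1 = x" "last q1 = ?z" using wk_prefix[OF p1(1) z1] p1(2) by metis
      obtain q2 where q2: "wk F q2" "hd q2 = y" "last q2 = ?z" using wk_prefix[OF p2(1) z2] p2(2) by metis
      have "Re x y" using join[OF q1(1) q2(1)] q1 q2 unfolding Re_def by metis
      then show False using False by blast
    qed
    then show ?thesis using n1 n2 by blast
  qed
  then show "\<exists>\<theta>::'a \<Rightarrow> 'k. (\<forall>v. v \<notin> V \<longrightarrow> \<theta> v = 0) \<and> nsq E \<theta> = (\<lambda>f. if f = e then 1 else 0)"
  proof
    assume "\<not> Ow x x \<and> \<not> Ow x y"
    then show ?thesis using construct[OF assms(1) eE xy(4) xy(1) xy(2) assms(3)] unfolding Ow_def F_def by blast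
  next
    assume "\<not> Ow y y \<and> \<not> Ow y x"
    moreover have "e = {y,x}" using xy(4) by (simp add: insert_commute)
    ultimately show ?thesis using construct[OF assms(1) eE _ _ xy(3) assms(3), of x] xy(1) unfolding Ow_def F_def by blast
  qed
qed

end
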